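(* For all integers $0\le t\le n$, there exists a $2$-CNF formula $F$ on $n$ variables that is acyclic, $t$-admissible, and satisfies $|\mathrm{sat}_t(F)|=S(n,t,2)$.
   Context: A $2$-CNF formula over $x_1,\dots,x_n$ is a conjunction of clauses each containing at most two literals. The implication graph $G(F)$ of a $2$-CNF $F$ is the directed graph on the $2n$ literals $x_1,\dots,x_n,\neg x_1,\dots,\neg x_n$ which, for each clause $X\lor Y$ ($X,Y$ literals), contains the edges $\neg X\to Y$ and $\neg Y\to X$ (a unit clause $X$ is treated as $X\lor X$). $F$ is acyclic if $G(F)$ has no directed cycle. $\mathrm{sat}_t(F)$ is the set of satisfying assignments of Hamming weight exactly $t$; $F$ is $t$-admissible if it has no satisfying assignment of Hamming weight less than $t$; $S(n,t,k)$ is the maximum of $|\mathrm{sat}_t(F)|$ over $t$-admissible $k$-CNF formulas $F$ on $n$ variables. *)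

theory Defs
  imports Main
begin

text \<open>Variables are x_0,...,x_(n-1), represented by natural numbers i < n.
A literal is a pair (i, b): (i, True) is x_i and (i, False) is its negation.
An assignment is the set of variables set to true; its Hamming weight is its cardinality.\<close>

type_synonym lit = "nat \<times> bool"
type_synonym clause = "lit set"
type_synonym cnf = "clause set"

definition neg_lit :: "lit \<Rightarrow> lit" where
  "neg_lit l = (fst l, \<not> snd l)"

definition lit_true :: "nat set \<Rightarrow> lit \<Rightarrow> bool" where
  "lit_true A l \<longleftrightarrow> ((fst l \<in> A) = snd l)"

definition satisfies :: "nat set \<Rightarrow> cnf \<Rightarrow> bool" where
  "satisfies A F \<longleftrightarrow> (\<forall>C\<in>F. \<exists>l\<in>C. lit_true A l)"

definition is_kcnf :: "nat \<Rightarrow> nat \<Rightarrow> cnf \<Rightarrow> bool" where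
  "is_kcnf n k F \<longleftrightarrow> finite F \<and>
     (\<forall>C\<in>F. finite C \<and> card C \<le> k \<and> (\<forall>l\<in>C. fst l < n))"

definition sat_t :: "nat \<Rightarrow> nat \<Rightarrow> cnf \<Rightarrow> nat set set" where
  "sat_t n t F = {A. A \<subseteq> {..<n} \<and> card A = t \<and> satisfies A F}"

definition t_admissible :: "nat \<Rightarrow> nat \<Rightarrow> cnf \<Rightarrow> bool" where
  "t_admissible n t F \<longleftrightarrow> (\<forall>A. A \<subseteq> {..<n} \<and> card A < t \<longrightarrow> \<not> satisfies A F)"

definition S :: "nat \<Rightarrow> nat \<Rightarrow> nat \<Rightarrow> nat" where
  "S n t k = Max {card (sat_t n t F) | F. is_kcnf n k F \<and> t_admissible n t F}"

text \<open>Implication graph: clause X \<or> Y gives edges \<not>X \<rightarrow> Y and \<not>Y \<rightarrow> X;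
a unit clause X is treated as X \<or> X, giving \<not>X \<rightarrow> X.\<close>
definition impl_graph :: "cnf \<Rightarrow> (lit \<times> lit) set" where
  "impl_graph F = {(neg_lit X, Y) | X Y C. C \<in> F \<and> X \<in> C \<and> Y \<in> C \<and> (X \<noteq> Y \<or> card C = 1)}"

definition acyclic_cnf :: "cnf \<Rightarrow> bool" where
  "acyclic_cnf F \<longleftrightarrow> acyclic (impl_graph F)"

end

theory Submission
  imports Defs
begin

definition maj :: "nat set \<Rightarrow> nat set \<Rightarrow> nat set \<Rightarrow> nat set" where
  "maj B1 B2 B3 = (B1 \<inter> B2) \<union> (B1 \<inter> B3) \<union> (B2 \<inter> B3)"

lemma lit_maj:
  assumes "lit_true Bi l" "lit_true Bj l" "i \<noteq> j" "i \<in> {1,2,3::nat}" "j \<in> {1,2,3}"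
    "Bi = (if i = 1 then B1 else if i = 2 then B2 else B3)"
    "Bj = (if j = 1 then B1 else if j = 2 then B2 else B3)"
  shows "lit_true (maj B1 B2 B3) l"
  using assms unfolding lit_true_def maj_def by (cases l) (auto split: if_splits)

lemma maj_sat:
  assumes k: "is_kcnf n 2 F" and s: "satisfies B1 F" "satisfies B2 F" "satisfies B3 F"
  shows "satisfies (maj B1 B2 B3) F"
  unfolding satisfies_def
proof
  fix C assume C: "C \<in> F"
  obtain l1 where l1: "l1 \<in> C" "lit_true B1 l1" using s(1) C unfolding satisfies_def by blast
  obtain l2 where l2: "l2 \<in> C" "lit_true B2 l2" using s(2) C unfolding satisfies_def by blast
  obtain l3 where l3: "l3 \<in> C" "lit_true B3 l3" using s(3) C unfolding satisfies_def by blast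
  have fc: "finite C" "card C \<le> 2" using k C unfolding is_kcnf_def by auto
  have "l1 = l2 \<or> l1 = l3 \<or> l2 = l3"
  proof (rule ccontr)
    assume "\<not> ?thesis"
    then have "card {l1,l2,l3} = 3" by auto
    moreover have "card {l1,l2,l3} \<le> card C" using l1 l2 l3 fc by (intro card_mono) auto
    ultimately show False using fc by simp
  qed
  then have "lit_true (maj B1 B2 B3) l1 \<or> lit_true (maj B1 B2 B3) l3"
    using l1 l2 l3 unfolding lit_true_def maj_def by (cases l1; cases l3) auto
  then show "\<exists>l\<in>C. lit_true (maj B1 B2 B3) l" using l1 l3 by blast
qed

definition sol :: "nat \<Rightarrow> cnf \<Rightarrow> nat set \<Rightarrow> bool" where
  "sol n F B \<longleftrightarrow> B \<subseteq> {..<n} \<and> satisfies B F"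

lemma helly:
  assumes k: "is_kcnf n 2 F"
  shows "finite I \<Longrightarrow> I \<noteq> {} \<Longrightarrow> (\<forall>u\<in>I. \<forall>w\<in>I. \<exists>B. sol n F B \<and> u \<notin> B \<and> w \<notin> B)
     \<Longrightarrow> \<exists>B. sol n F B \<and> B \<inter> I = {}"
proof (induction "card I" arbitrary: I rule: less_induct)
  case less
  show ?case
  proof (cases "card I \<le> 2")
    case True
    then have "card I = 1 \<or> card I = 2" using less.prems by (cases "card I") auto
    then obtain u w where "I = {u,w}"
      by (metis card_1_singletonE card_2_iff insert_absorb2)
    then show ?thesis using less.prems(3) by blast
  next
    case False
    then obtain u1 u2 u3 where u: "u1 \<in> I" "u2 \<in> I" "u3 \<in> I" "u1 \<noteq> u2" "u1 \<noteq> u3" "u2 \<noteq> u3"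
    proof -
      have c: "3 \<le> card I" using False by simp
      obtain u1 where a: "u1 \<in> I" using less.prems by blast
      have "card (I - {u1}) \<ge> 2" using c a less.prems by simp
      then obtain u2 where b: "u2 \<in> I - {u1}" by (metis card.empty ex_in_conv not_numeral_le_zero)
      have "card (I - {u1} - {u2}) \<ge> 1" using c a b less.prems by simp
      then obtain u3 where d: "u3 \<in> I - {u1} - {u2}" by (metis card.empty ex_in_conv not_one_le_zero)
      show ?thesis using that a b d by blast
    qed
    have ih: "\<exists>B. sol n F B \<and> B \<inter> (I - {x}) = {}" if "x \<in> I" for x
    proof -
      have "card (I - {x}) < card I" using that less.prems by (simp add: card_gt_0_iff)
      moreover have "I - {x} \<noteq> {}" using u that by blast
      ultimately show ?thesis using less.hyps[of "I - {x}"] less.prems by auto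
    qed
    obtain B1 where B1: "sol n F B1" "B1 \<inter> (I - {u1}) = {}" using ih u by blast
    obtain B2 where B2: "sol n F B2" "B2 \<inter> (I - {u2}) = {}" using ih u by blast
    obtain B3 where B3: "sol n F B3" "B3 \<inter> (I - {u3}) = {}" using ih u by blast
    have "sol n F (maj B1 B2 B3)" using B1 B2 B3 maj_sat[OF k]
      unfolding sol_def maj_def by blast
    moreover have "maj B1 B2 B3 \<inter> I = {}" using B1 B2 B3 u unfolding maj_def by blast
    ultimately show ?thesis by blast
  qed
qed


definition posF :: "nat \<Rightarrow> cnf \<Rightarrow> cnf" where
  "posF n F = {{(u,True),(w,True)} | u w. u < n \<and> w < n \<and> \<not> (\<exists>B. sol n F B \<and> u \<notin> B \<and> w \<notin> B)}"

lemma posF_kcnf: "is_kcnf n 2 (posF n F)"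
proof -
  have "posF n F \<subseteq> (\<lambda>(u,w). {(u,True),(w,True)}) ` ({..<n} \<times> {..<n})"
    unfolding posF_def by auto
  then have "finite (posF n F)" by (rule finite_subset) auto
  moreover have "card C \<le> 2" if "C \<in> posF n F" for C
    using that unfolding posF_def by (auto simp: card_insert_if)
  ultimately show ?thesis unfolding is_kcnf_def posF_def by auto
qed

lemma posF_acyclic: "acyclic_cnf (posF n F)"
proof -
  let ?r = "impl_graph (posF n F)"
  have e: "snd a = False \<and> snd b = True" if "(a,b) \<in> ?r" for a b
    using that unfolding impl_graph_def posF_def neg_lit_def by auto
  have "snd a = False \<and> snd b = True" if "(a,b) \<in> ?r\<^sup>+" for a b
    using that by (induction rule: trancl_induct) (auto dest: e)
  then show ?thesis unfolding acyclic_cnf_def acyclic_def by fastforce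
qed

lemma posF_sat: "satisfies A (posF n F) \<longleftrightarrow>
   (\<forall>u w. u < n \<and> w < n \<and> \<not> (\<exists>B. sol n F B \<and> u \<notin> B \<and> w \<notin> B) \<longrightarrow> u \<in> A \<or> w \<in> A)"
proof
  assume h: "satisfies A (posF n F)"
  show "\<forall>u w. u < n \<and> w < n \<and> \<not> (\<exists>B. sol n F B \<and> u \<notin> B \<and> w \<notin> B) \<longrightarrow> u \<in> A \<or> w \<in> A"
  proof (intro allI impI)
    fix u w assume "u < n \<and> w < n \<and> \<not> (\<exists>B. sol n F B \<and> u \<notin> B \<and> w \<notin> B)"
    then have "{(u,True),(w,True)} \<in> posF n F" unfolding posF_def by blast
    then show "u \<in> A \<or> w \<in> A" using h unfolding satisfies_def lit_true_def by auto
  qed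
next
  assume "\<forall>u w. u < n \<and> w < n \<and> \<not> (\<exists>B. sol n F B \<and> u \<notin> B \<and> w \<notin> B) \<longrightarrow> u \<in> A \<or> w \<in> A"
  then show "satisfies A (posF n F)" unfolding satisfies_def posF_def lit_true_def by auto
qed

lemma posF_adm:
  assumes k: "is_kcnf n 2 F" and a: "t_admissible n t F" and tn: "t \<le> n"
  shows "t_admissible n t (posF n F)"
  unfolding t_admissible_def
proof (intro allI impI notI)
  fix A assume A: "A \<subseteq> {..<n} \<and> card A < t" and s: "satisfies A (posF n F)"
  let ?I = "{..<n} - A"
  have "?I \<noteq> {}"
  proof
    assume "?I = {}"
    then have "{..<n} \<subseteq> A" by blast
    then have "n \<le> card A" using A by (metis card_lessThan card_mono finite_lessThan subset_antisym order_refl)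
    then show False using A tn by simp
  qed
  moreover have "\<forall>u\<in>?I. \<forall>w\<in>?I. \<exists>B. sol n F B \<and> u \<notin> B \<and> w \<notin> B"
    using s unfolding posF_sat by blast
  ultimately obtain B where B: "sol n F B" "B \<inter> ?I = {}" using helly[OF k, of ?I] by auto
  then have "B \<subseteq> A" unfolding sol_def by blast
  then have "card B \<le> card A" using A by (meson card_mono finite_lessThan finite_subset)
  then show False using a A B unfolding t_admissible_def sol_def by auto
qed

lemma posF_more:
  shows "card (sat_t n t F) \<le> card (sat_t n t (posF n F))"
proof (rule card_mono)
  show "finite (sat_t n t (posF n F))"
    by (rule finite_subset[of _ "Pow {..<n}"]) (auto simp: sat_t_def)
  show "sat_t n t F \<subseteq> sat_t n t (posF n F)"
    unfolding sat_t_def posF_sat sol_def by auto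
qed

theorem mainTheorem9:
  fixes n t :: nat
  assumes "t \<le> n"
  shows "\<exists>F. is_kcnf n 2 F \<and> acyclic_cnf F \<and> t_admissible n t F \<and>
             card (sat_t n t F) = S n t 2"
proof -
  let ?V = "{card (sat_t n t F) | F. is_kcnf n 2 F \<and> t_admissible n t F}"
  have bnd: "card (sat_t n t F) \<le> 2 ^ n" for F
  proof -
    have "card (sat_t n t F) \<le> card (Pow {..<n::nat})"
      by (rule card_mono) (auto simp: sat_t_def)
    then show ?thesis by (simp add: card_Pow)
  qed
  have fin: "finite ?V" by (rule finite_subset[of _ "{..2^n}"]) (auto simp: bnd)
  have "is_kcnf n 2 {{}} \<and> t_admissible n t {{}}"
    unfolding is_kcnf_def t_admissible_def satisfies_def by auto
  then have ne: "?V \<noteq> {}" by blast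
  have "Max ?V \<in> ?V" using fin ne by (rule Max_in)
  then obtain F where F: "is_kcnf n 2 F" "t_admissible n t F" "card (sat_t n t F) = S n t 2"
    unfolding S_def by auto
  let ?G = "posF n F"
  have G: "is_kcnf n 2 ?G" "t_admissible n t ?G" "acyclic_cnf ?G"
    using posF_kcnf posF_adm[OF F(1,2) assms] posF_acyclic by auto
  then have "card (sat_t n t ?G) \<le> S n t 2" unfolding S_def using fin by (intro Max_ge) auto
  moreover have "card (sat_t n t F) \<le> card (sat_t n t ?G)" by (rule posF_more)
  ultimately show ?thesis using F G by (intro exI[of _ ?G]) auto
qed

end
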